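(* Let a skew fibration of $\mathbb R^n$ by oriented affine $k$-planes be given, with $U\subset G_k(n)$ the set of oriented linear planes parallel to its fibers and, for $u\in U$, $(u,v(u))$ the fiber parallel to $u$. Let $(u_n,v_n)$, $v_n=v(u_n)$, be a sequence of fibers with $u_n$ converging to a point of $\overline U\setminus U$, and suppose (after passing to a subsequence) that the great $k$-spheres $S_{(u_n,v_n)}$ converge to a great $k$-sphere $S$. Then $S$ is contained in the equator $S^{n-1}$ and $S$ is disjoint from $L$.
   Context: Identify $\mathbb R^n$ with the hyperplane $\{x_{n+1}=1\}\subset\mathbb R^{n+1}$, tangent to the unit sphere $S^n$ at the north pole. For an affine plane $P=(u,v)$ (with $u$ the parallel oriented linear plane and $v\in u^\perp$ its point nearest the origin), $\alpha(P)$ is the linear span of $P\times\{1\}$ in $\mathbb R^{n+1}$ and $S_{(u,v)}=S^n\cap\alpha(P)$, a great $k$-sphere; convergence of great spheres means convergence of the corresponding linear $(k+1)$-planes in the Grassmannian. The equator $S^{n-1}=S^n\cap\{x_{n+1}=0\}$ is identified with the unit sphere of $\mathbb R^n$, and $L=\bigcup_{u\in U}(u\cap S^{n-1})$ is the set of oriented directions contained in fibers. A fibration is skew if its fibers are pairwise disjoint oriented affine $k$-planes covering $\mathbb R^n$, varying continuously, no two of which contain parallel lines. *)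

theory Defs
  imports "HOL-Analysis.Analysis"
begin

text \<open>Oriented linear k-planes in R^n (R^n = real^'n, k = CARD('k)) are represented
  as equivalence classes of ordered orthonormal k-frames: two frames represent the same
  oriented plane iff they span the same subspace and the change-of-frame matrix has
  positive determinant.\<close>

definition orthonormal_frame :: "('k::finite \<Rightarrow> 'a::euclidean_space) \<Rightarrow> bool" where
  "orthonormal_frame F \<longleftrightarrow> (\<forall>i j. F i \<bullet> F j = (if i = j then 1 else 0))"

definition oplane_of :: "('k::finite \<Rightarrow> 'a::euclidean_space) \<Rightarrow> ('k \<Rightarrow> 'a) set" where
  "oplane_of F = {G. orthonormal_frame G \<and> span (range G) = span (range F)
                     \<and> det ((\<chi> i j. F i \<bullet> G j) :: real^'k^'k) > 0}"

definition is_oplane :: "('k::finite \<Rightarrow> 'a::euclidean_space) set \<Rightarrow> bool" where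
  "is_oplane u \<longleftrightarrow> (\<exists>F. orthonormal_frame F \<and> u = oplane_of F)"

definition lin :: "('k::finite \<Rightarrow> 'a::euclidean_space) set \<Rightarrow> 'a set" where
  "lin u = {x. \<exists>F\<in>u. x \<in> span (range F)}"

text \<open>convergence in the oriented Grassmannian (quotient topology of the Stiefel manifold)\<close>
definition oplane_tendsto ::
  "(nat \<Rightarrow> ('k::finite \<Rightarrow> 'a::euclidean_space) set) \<Rightarrow> ('k \<Rightarrow> 'a) set \<Rightarrow> bool" where
  "oplane_tendsto us u \<longleftrightarrow>
     (\<exists>Fs F. (\<forall>m. Fs m \<in> us m) \<and> F \<in> u \<and> (\<forall>i. (\<lambda>m. Fs m i) \<longlonglongrightarrow> F i))"

definition aff :: "('k::finite \<Rightarrow> 'a::euclidean_space) set \<times> 'a \<Rightarrow> 'a set" where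
  "aff P = (\<lambda>x. snd P + x) ` lin (fst P)"

definition skew_fibration ::
  "(('k::finite \<Rightarrow> 'a::euclidean_space) set \<times> 'a) set \<Rightarrow> bool" where
  "skew_fibration Fib \<longleftrightarrow>
     (\<forall>P\<in>Fib. is_oplane (fst P) \<and> (\<forall>x\<in>lin (fst P). snd P \<bullet> x = 0))
   \<and> (\<forall>P\<in>Fib. \<forall>Q\<in>Fib. P \<noteq> Q \<longrightarrow> aff P \<inter> aff Q = {})
   \<and> (\<forall>x. \<exists>P\<in>Fib. x \<in> aff P)
   \<and> (\<forall>x xs P Ps. xs \<longlonglongrightarrow> x \<longrightarrow> P \<in> Fib \<longrightarrow> x \<in> aff P
        \<longrightarrow> (\<forall>m. Ps m \<in> Fib \<and> xs m \<in> aff (Ps m))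
        \<longrightarrow> oplane_tendsto (\<lambda>m. fst (Ps m)) (fst P) \<and> (\<lambda>m. snd (Ps m)) \<longlonglongrightarrow> snd P)
   \<and> (\<forall>P\<in>Fib. \<forall>Q\<in>Fib. P \<noteq> Q \<longrightarrow> lin (fst P) \<inter> lin (fst Q) = {0})"

definition alpha :: "('k::finite \<Rightarrow> 'a::euclidean_space) set \<times> 'a \<Rightarrow> ('a \<times> real) set" where
  "alpha P = span ((\<lambda>x. (x, 1)) ` aff P)"

definition onb :: "nat \<Rightarrow> (nat \<Rightarrow> 'a::euclidean_space) \<Rightarrow> 'a set \<Rightarrow> bool" where
  "onb d B W \<longleftrightarrow> (\<forall>i<d. \<forall>j<d. B i \<bullet> B j = (if i = j then 1 else 0)) \<and> span (B ` {..<d}) = W"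

definition grass_tendsto :: "nat \<Rightarrow> (nat \<Rightarrow> 'a::euclidean_space set) \<Rightarrow> 'a set \<Rightarrow> bool" where
  "grass_tendsto d Ws W \<longleftrightarrow>
     (\<exists>Bs B. (\<forall>m. onb d (Bs m) (Ws m)) \<and> onb d B W \<and> (\<forall>i<d. (\<lambda>m. Bs m i) \<longlonglongrightarrow> B i))"

definition equator :: "('a::euclidean_space \<times> real) set" where
  "equator = sphere 0 1 \<inter> {p. snd p = 0}"

end

theory Submission
  imports Defs "HOL-Homology.Invariance_of_Domain"
begin


lemma onb_expand:
  fixes B :: "'i \<Rightarrow> 'a::euclidean_space"
  assumes fin: "finite I" and on: "\<forall>i\<in>I. \<forall>j\<in>I. B i \<bullet> B j = (if i = j then 1 else 0)"
    and y: "y \<in> span (B ` I)"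
  shows "y = (\<Sum>i\<in>I. (y \<bullet> B i) *\<^sub>R B i)"
proof -
  have "subspace {y. y = (\<Sum>i\<in>I. (y \<bullet> B i) *\<^sub>R B i)}"
    unfolding subspace_def
  proof (intro conjI allI ballI; unfold mem_Collect_eq)
    show "0 = (\<Sum>i\<in>I. (0 \<bullet> B i) *\<^sub>R B i)" by simp
  next
    fix x y assume "x = (\<Sum>i\<in>I. (x \<bullet> B i) *\<^sub>R B i)" "y = (\<Sum>i\<in>I. (y \<bullet> B i) *\<^sub>R B i)"
    then show "x + y = (\<Sum>i\<in>I. ((x + y) \<bullet> B i) *\<^sub>R B i)"
      by (simp add: inner_add_left scaleR_add_left sum.distrib)
  next
    fix c x assume h: "x = (\<Sum>i\<in>I. (x \<bullet> B i) *\<^sub>R B i)"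
    have "c *\<^sub>R x = c *\<^sub>R (\<Sum>i\<in>I. (x \<bullet> B i) *\<^sub>R B i)" using h by simp
    also have "\<dots> = (\<Sum>i\<in>I. ((c *\<^sub>R x) \<bullet> B i) *\<^sub>R B i)"
      by (simp add: scaleR_sum_right)
    finally show "c *\<^sub>R x = (\<Sum>i\<in>I. ((c *\<^sub>R x) \<bullet> B i) *\<^sub>R B i)" .
  qed
  moreover have "B ` I \<subseteq> {y. y = (\<Sum>i\<in>I. (y \<bullet> B i) *\<^sub>R B i)}"
  proof clarify
    fix j assume j: "j \<in> I"
    have "(\<Sum>i\<in>I. (B j \<bullet> B i) *\<^sub>R B i) = (\<Sum>i\<in>I. (if j = i then B i else 0))"
      using on j by (intro sum.cong) auto
    also have "\<dots> = B j" using j fin by simp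
    finally show "B j = (\<Sum>i\<in>I. (B j \<bullet> B i) *\<^sub>R B i)" by simp
  qed
  ultimately show ?thesis using y span_minimal by blast
qed

lemma onb_inner:
  fixes B :: "'i \<Rightarrow> 'a::euclidean_space"
  assumes fin: "finite I" and on: "\<forall>i\<in>I. \<forall>j\<in>I. B i \<bullet> B j = (if i = j then 1 else 0)"
    and b: "b \<in> span (B ` I)"
  shows "a \<bullet> b = (\<Sum>i\<in>I. (a \<bullet> B i) * (b \<bullet> B i))"
proof -
  have "a \<bullet> b = a \<bullet> (\<Sum>i\<in>I. (b \<bullet> B i) *\<^sub>R B i)" using onb_expand[OF fin on b] by simp
  also have "\<dots> = (\<Sum>i\<in>I. (a \<bullet> B i) * (b \<bullet> B i))" by (simp add: inner_sum_right mult.commute)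
  finally show ?thesis .
qed

lemma onb_proj:
  fixes B :: "'i \<Rightarrow> 'a::euclidean_space"
  assumes fin: "finite I" and on: "\<forall>i\<in>I. \<forall>j\<in>I. B i \<bullet> B j = (if i = j then 1 else 0)"
  shows "(\<Sum>i\<in>I. (e \<bullet> B i) *\<^sub>R B i) \<in> span (B ` I)"
    and "y \<in> span (B ` I) \<Longrightarrow> (e - (\<Sum>i\<in>I. (e \<bullet> B i) *\<^sub>R B i)) \<bullet> y = 0"
proof -
  show "(\<Sum>i\<in>I. (e \<bullet> B i) *\<^sub>R B i) \<in> span (B ` I)"
    by (intro span_sum span_scale span_base) auto
  assume y: "y \<in> span (B ` I)"
  have "(\<Sum>i\<in>I. (e \<bullet> B i) *\<^sub>R B i) \<bullet> y = (\<Sum>i\<in>I. (e \<bullet> B i) * (y \<bullet> B i))"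
    by (simp add: inner_sum_left inner_commute[of "B _" y])
  also have "\<dots> = e \<bullet> y" using onb_inner[OF fin on y] by simp
  finally show "(e - (\<Sum>i\<in>I. (e \<bullet> B i) *\<^sub>R B i)) \<bullet> y = 0" by (simp add: inner_diff_left)
qed

lemma proj_unique:
  fixes p q :: "'a::euclidean_space"
  assumes "subspace V" "p \<in> V" "q \<in> V" "\<forall>y\<in>V. (e - p) \<bullet> y = 0" "\<forall>y\<in>V. (e - q) \<bullet> y = 0"
  shows "p = q"
proof -
  have d: "p - q \<in> V" using assms by (simp add: subspace_diff)
  have "(p - q) \<bullet> (p - q) = (e - q) \<bullet> (p - q) - (e - p) \<bullet> (p - q)"
    by (simp add: inner_diff_left)
  also have "\<dots> = 0" using assms d by simp
  finally show ?thesis by simp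
qed

lemma in_span_if_norm:
  fixes B :: "'i \<Rightarrow> 'a::euclidean_space"
  assumes fin: "finite I" and on: "\<forall>i\<in>I. \<forall>j\<in>I. B i \<bullet> B j = (if i = j then 1 else 0)"
    and eq: "(\<Sum>i\<in>I. (g \<bullet> B i)^2) = g \<bullet> g"
  shows "g \<in> span (B ` I)"
proof -
  define p where "p = (\<Sum>i\<in>I. (g \<bullet> B i) *\<^sub>R B i)"
  have p: "p \<in> span (B ` I)" unfolding p_def by (rule onb_proj[OF fin on])
  have o: "(g - p) \<bullet> p = 0" unfolding p_def using onb_proj[OF fin on] p p_def by blast
  have pp: "p \<bullet> p = (\<Sum>i\<in>I. (g \<bullet> B i)^2)"
  proof -
    have "p \<bullet> p = (\<Sum>i\<in>I. (p \<bullet> B i) * (p \<bullet> B i))" by (rule onb_inner[OF fin on p])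
    also have "\<dots> = (\<Sum>i\<in>I. (g \<bullet> B i)^2)"
    proof (rule sum.cong)
      fix i assume i: "i \<in> I"
      have "(g - p) \<bullet> B i = 0" unfolding p_def
        using onb_proj(2)[OF fin on, of "B i" g] i by (simp add: span_base)
      then have "p \<bullet> B i = g \<bullet> B i" by (simp add: inner_diff_left)
      then show "(p \<bullet> B i) * (p \<bullet> B i) = (g \<bullet> B i)^2" by (simp add: power2_eq_square)
    qed simp
    finally show ?thesis .
  qed
  have "(g - p) \<bullet> (g - p) = g \<bullet> g - p \<bullet> p - 2 * ((g - p) \<bullet> p)"
    by (simp add: inner_diff_left inner_diff_right inner_commute)
  also have "\<dots> = 0" using o pp eq by simp
  finally have "g = p" by simp
  with p show ?thesis by simp
qed

lemma frame_on: "orthonormal_frame F \<Longrightarrow> \<forall>i\<in>UNIV. \<forall>j\<in>UNIV. F i \<bullet> F j = (if i = j then 1 else 0)"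
  by (simp add: orthonormal_frame_def)

lemma oplane_memD:
  assumes "G \<in> oplane_of F"
  shows "orthonormal_frame G" "span (range G) = span (range F)"
    "det ((\<chi> i j. F i \<bullet> G j) :: real^'k^'k) > 0"
  using assms by (auto simp: oplane_of_def)

lemma self_mem_oplane:
  fixes F :: "'k::finite \<Rightarrow> 'a::euclidean_space"
  assumes "orthonormal_frame F" shows "F \<in> oplane_of F"
proof -
  have "((\<chi> i j. F i \<bullet> F j) :: real^'k^'k) = mat 1"
    using assms by (simp add: mat_def vec_eq_iff orthonormal_frame_def)
  then show ?thesis using assms by (simp add: oplane_of_def)
qed

lemma lin_oplane:
  fixes F :: "'k::finite \<Rightarrow> 'a::euclidean_space"
  assumes "orthonormal_frame F" shows "lin (oplane_of F) = span (range F)"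
  using self_mem_oplane[OF assms] by (auto simp: lin_def oplane_of_def)

lemma frame_matmul:
  fixes F G X :: "'k::finite \<Rightarrow> 'a::euclidean_space"
  assumes G: "orthonormal_frame G" and X: "\<And>j. X j \<in> span (range G)"
  shows "((\<chi> i j. F i \<bullet> X j) :: real^'k^'k) = (\<chi> i j. F i \<bullet> G j) ** (\<chi> i j. G i \<bullet> X j)"
proof -
  have "F i \<bullet> X j = (\<Sum>l\<in>UNIV. (F i \<bullet> G l) * (G l \<bullet> X j))" for i j
    using onb_inner[OF finite frame_on[OF G] X[of j], of "F i"] by (simp add: inner_commute)
  then show ?thesis by (simp add: matrix_matrix_mult_def vec_eq_iff)
qed

lemma frame_transpose:
  fixes F G :: "'k::finite \<Rightarrow> 'a::euclidean_space"
  shows "transpose ((\<chi> i j. F i \<bullet> G j) :: real^'k^'k) = (\<chi> i j. G i \<bullet> F j)"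
  by (simp add: transpose_def vec_eq_iff inner_commute)

lemma oplane_class:
  fixes F G :: "'k::finite \<Rightarrow> 'a::euclidean_space"
  assumes F: "orthonormal_frame F" and G: "G \<in> oplane_of F"
  shows "oplane_of G = oplane_of F"
proof -
  note g = oplane_memD[OF G]
  have FG: "det ((\<chi> i j. G i \<bullet> F j) :: real^'k^'k) > 0"
    using g(3) frame_transpose[of F G] det_transpose by metis
  show ?thesis
  proof (rule subset_antisym; rule subsetI)
    fix X assume X: "X \<in> oplane_of G"
    note x = oplane_memD[OF X]
    have "((\<chi> i j. F i \<bullet> X j) :: real^'k^'k) = (\<chi> i j. F i \<bullet> G j) ** (\<chi> i j. G i \<bullet> X j)"
      by (rule frame_matmul[OF g(1)]) (use x(2) in \<open>auto intro: span_base\<close>)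
    then have "det ((\<chi> i j. F i \<bullet> X j) :: real^'k^'k) > 0"
      using g(3) x(3) by (simp add: det_mul)
    then show "X \<in> oplane_of F" using x g by (simp add: oplane_of_def)
  next
    fix X assume X: "X \<in> oplane_of F"
    note x = oplane_memD[OF X]
    have "((\<chi> i j. G i \<bullet> X j) :: real^'k^'k) = (\<chi> i j. G i \<bullet> F j) ** (\<chi> i j. F i \<bullet> X j)"
      by (rule frame_matmul[OF F]) (use x(2) in \<open>auto intro: span_base\<close>)
    then have "det ((\<chi> i j. G i \<bullet> X j) :: real^'k^'k) > 0"
      using FG x(3) by (simp add: det_mul)
    then show "X \<in> oplane_of G" using x g by (simp add: oplane_of_def)
  qed
qed

lemma is_oplane_mem:
  fixes u :: "('k::finite \<Rightarrow> 'a::euclidean_space) set"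
  assumes "is_oplane u" "E \<in> u"
  shows "u = oplane_of E" "orthonormal_frame E" "lin u = span (range E)"
proof -
  obtain F where F: "orthonormal_frame F" "u = oplane_of F" using assms(1) is_oplane_def by blast
  show "u = oplane_of E" using oplane_class[OF F(1)] assms(2) F(2) by simp
  show E: "orthonormal_frame E" using oplane_memD(1) assms(2) F(2) by blast
  show "lin u = span (range E)" using lin_oplane[OF E] \<open>u = oplane_of E\<close> by simp
qed

lemma is_oplane_ne: "is_oplane u \<Longrightarrow> \<exists>E. E \<in> u"
  unfolding is_oplane_def using self_mem_oplane by blast

lemma tendsto_det:
  fixes M :: "nat \<Rightarrow> real^'k::finite^'k"
  assumes "\<And>i j. (\<lambda>m. M m $ i $ j) \<longlonglongrightarrow> A $ i $ j"
  shows "(\<lambda>m. det (M m)) \<longlonglongrightarrow> det A"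
  unfolding det_def by (intro tendsto_intros assms)

lemma span_eq_of_subsets:
  assumes "A \<subseteq> span B" "B \<subseteq> span A" shows "span A = span B"
  using assms by (metis span_minimal span_span subset_antisym subspace_span)

lemma oplane_lim_unique:
  fixes us :: "nat \<Rightarrow> ('k::finite \<Rightarrow> 'a::euclidean_space) set"
  assumes us: "\<And>m. is_oplane (us m)" and a: "is_oplane a" and b: "is_oplane b"
    and ta: "oplane_tendsto us a" and tb: "oplane_tendsto us b"
  shows "a = b"
proof -
  obtain Xs F where X: "\<And>m. Xs m \<in> us m" "F \<in> a" "\<And>i. (\<lambda>m. Xs m i) \<longlonglongrightarrow> F i"
    using ta oplane_tendsto_def by blast
  obtain Ys G where Y: "\<And>m. Ys m \<in> us m" "G \<in> b" "\<And>i. (\<lambda>m. Ys m i) \<longlonglongrightarrow> G i"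
    using tb oplane_tendsto_def by blast
  have uX: "us m = oplane_of (Xs m)" and oX: "orthonormal_frame (Xs m)" for m
    using is_oplane_mem[OF us X(1)] by auto
  have YX: "Ys m \<in> oplane_of (Xs m)" for m using Y(1) uX by metis
  note yx = oplane_memD[OF YX]
  have oF: "orthonormal_frame F" and aF: "a = oplane_of F" using is_oplane_mem[OF a X(2)] by auto
  have oG: "orthonormal_frame G" and bG: "b = oplane_of G" using is_oplane_mem[OF b Y(2)] by auto
  define M where "M m = ((\<chi> i j. Xs m i \<bullet> Ys m j) :: real^'k^'k)" for m
  have YinX: "Ys m j \<in> span (range (Xs m))" for m j using yx(2)[of m] by (metis rangeI span_base)
  have XinY: "Xs m j \<in> span (range (Ys m))" for m j using yx(2)[of m] by (metis rangeI span_base)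
  have "transpose (M m) ** M m = mat 1" for m
  proof -
    have "(\<Sum>l\<in>UNIV. (Xs m l \<bullet> Ys m i) * (Xs m l \<bullet> Ys m j)) = (if i = j then 1 else 0)" for i j
      using onb_inner[OF finite frame_on[OF oX[of m]] YinX[of m j], of "Ys m i"] yx(1)[of m]
      by (simp add: inner_commute orthonormal_frame_def)
    then show ?thesis
      by (simp add: M_def matrix_matrix_mult_def transpose_def mat_def vec_eq_iff)
  qed
  then have "det (M m) * det (M m) = 1" for m
    by (metis det_I det_mul det_transpose)
  moreover have "det (M m) > 0" for m using yx(3) M_def by simp
  ultimately have d1: "det (M m) = 1" for m
  proof -
    have "(det (M m) - 1) * (det (M m) + 1) = 0"
      using \<open>det (M m) * det (M m) = 1\<close> by (simp add: algebra_simps)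
    then show ?thesis using \<open>det (M m) > 0\<close> by simp
  qed
  have "(\<lambda>m. det (M m)) \<longlonglongrightarrow> det ((\<chi> i j. F i \<bullet> G j) :: real^'k^'k)"
    by (rule tendsto_det) (simp add: M_def tendsto_inner X(3) Y(3))
  moreover have "(\<lambda>m. det (M m)) \<longlonglongrightarrow> 1" using d1 by simp
  ultimately have dFG: "det ((\<chi> i j. F i \<bullet> G j) :: real^'k^'k) = 1"
    by (rule LIMSEQ_unique)
  have GF: "G j \<in> span (range F)" for j
  proof -
    have "(\<lambda>m. \<Sum>i\<in>UNIV. (Ys m j \<bullet> Xs m i)^2) \<longlonglongrightarrow> (\<Sum>i\<in>UNIV. (G j \<bullet> F i)^2)"
      by (intro tendsto_sum tendsto_power tendsto_inner X(3) Y(3))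
    moreover have "(\<Sum>i\<in>UNIV. (Ys m j \<bullet> Xs m i)^2) = 1" for m
      using onb_inner[OF finite frame_on[OF oX[of m]] YinX[of m j], of "Ys m j"] yx(1)[of m]
      by (simp add: power2_eq_square orthonormal_frame_def)
    ultimately have "(\<Sum>i\<in>UNIV. (G j \<bullet> F i)^2) = 1" by (simp add: LIMSEQ_const_iff)
    then show ?thesis using in_span_if_norm[OF finite frame_on[OF oF], of "G j"] oG
      by (simp add: orthonormal_frame_def)
  qed
  have FG: "F j \<in> span (range G)" for j
  proof -
    have "(\<lambda>m. \<Sum>i\<in>UNIV. (Xs m j \<bullet> Ys m i)^2) \<longlonglongrightarrow> (\<Sum>i\<in>UNIV. (F j \<bullet> G i)^2)"
      by (intro tendsto_sum tendsto_power tendsto_inner X(3) Y(3))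
    moreover have "(\<Sum>i\<in>UNIV. (Xs m j \<bullet> Ys m i)^2) = 1" for m
      using onb_inner[OF finite frame_on[OF yx(1)[of m]] XinY[of m j], of "Xs m j"] oX[of m]
      by (simp add: power2_eq_square orthonormal_frame_def)
    ultimately have "(\<Sum>i\<in>UNIV. (F j \<bullet> G i)^2) = 1" by (simp add: LIMSEQ_const_iff)
    then show ?thesis using in_span_if_norm[OF finite frame_on[OF oG], of "F j"] oF
      by (simp add: orthonormal_frame_def)
  qed
  have "span (range G) = span (range F)"
    by (rule span_eq_of_subsets) (use GF FG in auto)
  then have "G \<in> oplane_of F" using oG dFG by (simp add: oplane_of_def)
  then show ?thesis using oplane_class[OF oF] aF bG by simp
qed

lemma subspace_lin: "is_oplane u \<Longrightarrow> subspace (lin u)"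
  using is_oplane_ne is_oplane_mem(3) by (metis subspace_span)

lemma zero_lin: "is_oplane u \<Longrightarrow> 0 \<in> lin u"
  using subspace_lin subspace_0 by blast

lemma skewD:
  assumes "skew_fibration Fib"
  shows "\<forall>P\<in>Fib. is_oplane (fst P) \<and> (\<forall>x\<in>lin (fst P). snd P \<bullet> x = 0)"
    "\<forall>P\<in>Fib. \<forall>Q\<in>Fib. P \<noteq> Q \<longrightarrow> aff P \<inter> aff Q = {}"
    "\<forall>x. \<exists>P\<in>Fib. x \<in> aff P"
    "\<forall>x xs P Ps. xs \<longlonglongrightarrow> x \<longrightarrow> P \<in> Fib \<longrightarrow> x \<in> aff P
        \<longrightarrow> (\<forall>m. Ps m \<in> Fib \<and> xs m \<in> aff (Ps m))
        \<longrightarrow> oplane_tendsto (\<lambda>m. fst (Ps m)) (fst P) \<and> (\<lambda>m. snd (Ps m)) \<longlonglongrightarrow> snd P"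
    "\<forall>P\<in>Fib. \<forall>Q\<in>Fib. P \<noteq> Q \<longrightarrow> lin (fst P) \<inter> lin (fst Q) = {0}"
  using assms[unfolded skew_fibration_def, THEN conjunct1]
    assms[unfolded skew_fibration_def, THEN conjunct2, THEN conjunct1]
    assms[unfolded skew_fibration_def, THEN conjunct2, THEN conjunct2, THEN conjunct1]
    assms[unfolded skew_fibration_def, THEN conjunct2, THEN conjunct2, THEN conjunct2, THEN conjunct1]
    assms[unfolded skew_fibration_def, THEN conjunct2, THEN conjunct2, THEN conjunct2, THEN conjunct2]
  by simp_all

lemma fibD:
  assumes "skew_fibration Fib" "P \<in> Fib"
  shows "is_oplane (fst P)" "\<And>x. x \<in> lin (fst P) \<Longrightarrow> snd P \<bullet> x = 0"
  using skewD(1)[OF assms(1)] assms(2) by auto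

lemma fib_disj:
  assumes "skew_fibration Fib" "P \<in> Fib" "Q \<in> Fib" "z \<in> aff P" "z \<in> aff Q" shows "P = Q"
proof (rule ccontr)
  assume "P \<noteq> Q"
  then have "aff P \<inter> aff Q = {}" using skewD(2)[OF assms(1)] assms(2,3) by blast
  then show False using assms(4,5) by blast
qed

lemma fib_skew:
  assumes "skew_fibration Fib" "P \<in> Fib" "Q \<in> Fib" "z \<in> lin (fst P)" "z \<in> lin (fst Q)" "z \<noteq> 0"
  shows "P = Q"
proof (rule ccontr)
  assume "P \<noteq> Q"
  then have "lin (fst P) \<inter> lin (fst Q) = {0}" using skewD(5)[OF assms(1)] assms(2,3) by blast
  then show False using assms(4,5,6) by blast
qed

lemma fib_cover: "skew_fibration Fib \<Longrightarrow> \<exists>P\<in>Fib. z \<in> aff P"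
  using skewD(3) by blast

lemma fib_cont:
  assumes "skew_fibration Fib" "xs \<longlonglongrightarrow> x" "P \<in> Fib" "x \<in> aff P" "\<And>m. Ps m \<in> Fib" "\<And>m. xs m \<in> aff (Ps m)"
  shows "oplane_tendsto (\<lambda>m. fst (Ps m)) (fst P)" "(\<lambda>m. snd (Ps m)) \<longlonglongrightarrow> snd P"
proof -
  have "\<forall>m. Ps m \<in> Fib \<and> xs m \<in> aff (Ps m)" using assms(5,6) by blast
  then have "oplane_tendsto (\<lambda>m. fst (Ps m)) (fst P) \<and> (\<lambda>m. snd (Ps m)) \<longlonglongrightarrow> snd P"
    using skewD(4)[OF assms(1), rule_format, OF assms(2,3,4)] by blast
  then show "oplane_tendsto (\<lambda>m. fst (Ps m)) (fst P)" "(\<lambda>m. snd (Ps m)) \<longlonglongrightarrow> snd P" by auto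
qed

lemma aff_iff: "z \<in> aff P \<longleftrightarrow> z - snd P \<in> lin (fst P)"
proof
  assume "z \<in> aff P" then show "z - snd P \<in> lin (fst P)" unfolding aff_def by auto
next
  assume "z - snd P \<in> lin (fst P)"
  then have "snd P + (z - snd P) \<in> aff P" unfolding aff_def by blast
  then show "z \<in> aff P" by simp
qed

lemma aff_iff2:
  assumes "is_oplane (fst P)" "z \<in> aff P" shows "w \<in> aff P \<longleftrightarrow> w - z \<in> lin (fst P)"
proof -
  have s: "subspace (lin (fst P))" using subspace_lin assms(1) by blast
  have z: "z - snd P \<in> lin (fst P)" using assms(2) aff_iff by blast
  have e1: "w - z = (w - snd P) - (z - snd P)" and e2: "w - snd P = (w - z) + (z - snd P)" by auto
  show ?thesis
  proof
    assume "w \<in> aff P"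
    then have "w - snd P \<in> lin (fst P)" using aff_iff by blast
    then show "w - z \<in> lin (fst P)" unfolding e1 using s z subspace_diff by blast
  next
    assume "w - z \<in> lin (fst P)"
    then have "w - snd P \<in> lin (fst P)" unfolding e2 using s z subspace_add by blast
    then show "w \<in> aff P" using aff_iff by blast
  qed
qed

lemma snd_in_aff: "is_oplane (fst P) \<Longrightarrow> snd P \<in> aff P"
  by (subst aff_iff) (simp add: zero_lin)

lemma alpha_char:
  assumes u: "is_oplane (fst P)"
  shows "alpha P = {(y + t *\<^sub>R snd P, t) | y t. y \<in> lin (fst P)}"
proof -
  let ?V = "{(y + t *\<^sub>R snd P, t) | y t. y \<in> lin (fst P)}"
  have s: "subspace (lin (fst P))" using subspace_lin u by blast
  have sV: "subspace ?V"
    unfolding subspace_def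
  proof (intro conjI ballI allI)
    show "0 \<in> ?V" by (intro CollectI exI[of _ 0] exI[of _ "0::real"]) (auto simp: zero_prod_def subspace_0[OF s])
  next
    fix a b assume "a \<in> ?V" "b \<in> ?V"
    then obtain y t y' t' where "a = (y + t *\<^sub>R snd P, t)" "b = (y' + t' *\<^sub>R snd P, t')"
      "y \<in> lin (fst P)" "y' \<in> lin (fst P)" by blast
    then show "a + b \<in> ?V" using s subspace_add
      by (intro CollectI exI[of _ "y + y'"] exI[of _ "t + t'"]) (auto simp: algebra_simps)
  next
    fix c a assume "a \<in> ?V"
    then obtain y t where "a = (y + t *\<^sub>R snd P, t)" "y \<in> lin (fst P)" by blast
    then show "c *\<^sub>R a \<in> ?V" using s subspace_scale
      by (intro CollectI exI[of _ "c *\<^sub>R y"] exI[of _ "c * t"]) (auto simp: algebra_simps)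
  qed
  have "alpha P \<subseteq> ?V"
    unfolding alpha_def
  proof (rule span_minimal[OF _ sV], rule subsetI)
    fix q assume "q \<in> (\<lambda>x. (x, 1::real)) ` aff P"
    then obtain z where z: "z \<in> aff P" "q = (z, 1)" by blast
    then have "z - snd P \<in> lin (fst P)" using aff_iff by blast
    then show "q \<in> ?V" using z(2) by (intro CollectI exI[of _ "z - snd P"] exI[of _ 1]) auto
  qed
  moreover have "?V \<subseteq> alpha P"
  proof clarify
    fix y t assume y: "y \<in> lin (fst P)"
    have v1: "(snd P, 1) \<in> alpha P" unfolding alpha_def using snd_in_aff[OF u]
      by (intro span_base) auto
    have "snd P + y \<in> aff P" using y by (subst aff_iff) simp
    then have v2: "(snd P + y, 1) \<in> alpha P" unfolding alpha_def by (intro span_base) auto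
    have "(y + t *\<^sub>R snd P, t) = t *\<^sub>R (snd P, 1) + ((snd P + y, 1) - (snd P, 1))"
      by (simp add: algebra_simps)
    also have "\<dots> \<in> alpha P" unfolding alpha_def
      using v1 v2 unfolding alpha_def by (intro span_add span_scale span_diff) auto
    finally show "(y + t *\<^sub>R snd P, t) \<in> alpha P" .
  qed
  ultimately show ?thesis by blast
qed

lemma alpha_common:
  assumes F: "skew_fibration Fib" and P: "P \<in> Fib" and Q: "Q \<in> Fib"
    and p: "p \<in> alpha P" "p \<in> alpha Q" "p \<noteq> 0"
  shows "P = Q"
proof -
  note fP = fibD[OF F P] and fQ = fibD[OF F Q]
  obtain y t where y: "p = (y + t *\<^sub>R snd P, t)" "y \<in> lin (fst P)" using p(1) alpha_char[OF fP(1)] by blast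
  obtain y' t' where y': "p = (y' + t' *\<^sub>R snd Q, t')" "y' \<in> lin (fst Q)" using p(2) alpha_char[OF fQ(1)] by blast
  have tt: "t' = t" using y y' by simp
  show ?thesis
  proof (cases "t = 0")
    case True
    then have "y = y'" "y \<noteq> 0" using y y' tt p(3) by (auto simp: zero_prod_def)
    then show ?thesis using fib_skew[OF F P Q] y y' by blast
  next
    case False
    let ?z = "(1/t) *\<^sub>R fst p"
    have "?z - snd P = (1/t) *\<^sub>R y" using y False by (simp add: algebra_simps)
    then have "?z \<in> aff P" using aff_iff subspace_scale[OF subspace_lin[OF fP(1)] y(2)] by metis
    moreover have "?z - snd Q = (1/t) *\<^sub>R y'" using y' tt False by (simp add: algebra_simps)
    then have "?z \<in> aff Q" using aff_iff subspace_scale[OF subspace_lin[OF fQ(1)] y'(2)] by metis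
    ultimately show ?thesis using fib_disj[OF F P Q] by blast
  qed
qed

lemma alpha_norm_bound:
  assumes "y \<bullet> v = 0"
  shows "\<bar>t\<bar> * norm v \<le> norm (y + t *\<^sub>R v, t)"
proof -
  have "norm (y + t *\<^sub>R v, t)^2 = (y + t *\<^sub>R v) \<bullet> (y + t *\<^sub>R v) + t^2"
    by (simp add: norm_Pair power2_norm_eq_inner)
  also have "\<dots> = y \<bullet> y + t^2 * (v \<bullet> v) + t^2"
    using assms by (simp add: inner_add_left inner_add_right inner_commute power2_eq_square algebra_simps)
  also have "\<dots> \<ge> (\<bar>t\<bar> * norm v)^2"
    by (simp add: power_mult_distrib power2_norm_eq_inner)
  finally show ?thesis by (rule power2_le_imp_le) simp
qed

lemma oplane_tendsto_subseq:
  assumes "oplane_tendsto us a" "strict_mono r" shows "oplane_tendsto (\<lambda>j. us (r j)) a"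
proof -
  obtain Fs F where X: "\<And>m. Fs m \<in> us m" "F \<in> a" "\<And>i. (\<lambda>m. Fs m i) \<longlonglongrightarrow> F i"
    using assms(1) oplane_tendsto_def by blast
  have "(\<lambda>j. Fs (r j) i) \<longlonglongrightarrow> F i" for i
    using LIMSEQ_subseq_LIMSEQ[OF X(3)[of i] assms(2)] by (simp add: o_def)
  then show ?thesis unfolding oplane_tendsto_def
    by (intro exI[of _ "\<lambda>j. Fs (r j)"] exI[of _ F]) (use X in auto)
qed

lemma vs_to_inf:
  fixes Fib :: "(('k::finite \<Rightarrow> real^'n) set \<times> (real^'n)) set"
  assumes F: "skew_fibration Fib" and fib: "\<And>m. (us m, vs m) \<in> Fib" and ub: "is_oplane ubar"
    and tu: "oplane_tendsto us ubar" and nU: "ubar \<notin> fst ` Fib"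
  shows "filterlim (\<lambda>m. norm (vs m)) at_top sequentially"
proof -
  have "\<exists>N. \<forall>m\<ge>N. Z \<le> norm (vs m)" for Z
  proof (rule ccontr)
    assume "\<not> (\<exists>N. \<forall>m\<ge>N. Z \<le> norm (vs m))"
    then have "infinite {m. norm (vs m) < Z}" unfolding infinite_nat_iff_unbounded_le
      by (auto simp: not_le)
    then obtain r0 :: "nat \<Rightarrow> nat" where r0: "strict_mono r0" "\<forall>j. r0 j \<in> {m. norm (vs m) < Z}"
      using infinite_enumerate by blast
    have "\<forall>j. vs (r0 j) \<in> cball 0 Z" using r0(2) by (auto intro: less_imp_le)
    then obtain l r1 where r1: "strict_mono (r1 :: nat \<Rightarrow> nat)" "((\<lambda>j. vs (r0 j)) \<circ> r1) \<longlonglongrightarrow> l"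
      using seq_compactE[OF compact_imp_seq_compact[OF compact_cball]] by metis
    define r where "r = r0 \<circ> r1"
    have r: "strict_mono r" unfolding r_def using r0(1) r1(1) by (rule strict_mono_o)
    have lim: "(\<lambda>j. vs (r j)) \<longlonglongrightarrow> l" using r1(2) by (simp add: r_def o_def)
    obtain P where P: "P \<in> Fib" "l \<in> aff P" using fib_cover[OF F] by blast
    have va: "vs (r j) \<in> aff (us (r j), vs (r j))" for j
      using snd_in_aff[of "(us (r j), vs (r j))"] fibD(1)[OF F fib[of "r j"]] by simp
    have "oplane_tendsto (\<lambda>j. fst ((us (r j), vs (r j)))) (fst P)"
      by (rule fib_cont(1)[OF F lim P(1) P(2)]) (use fib va in auto)
    then have t1: "oplane_tendsto (\<lambda>j. us (r j)) (fst P)" by simp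
    have t2: "oplane_tendsto (\<lambda>j. us (r j)) ubar" by (rule oplane_tendsto_subseq[OF tu r])
    have "fst P = ubar"
      by (rule oplane_lim_unique[OF _ fibD(1)[OF F P(1)] ub t1 t2]) (use fibD(1)[OF F fib] in simp)
    then show False using nU P(1) by blast
  qed
  then show ?thesis unfolding filterlim_at_top eventually_sequentially by blast
qed

lemma subspace_snd0: "subspace {p :: 'a::real_vector \<times> real. snd p = 0}"
  unfolding subspace_def by auto

lemma part1:
  fixes Fib :: "(('k::finite \<Rightarrow> real^'n) set \<times> (real^'n)) set"
  assumes F: "skew_fibration Fib" and fib: "\<And>m. (us m, vs m) \<in> Fib"
    and inf: "filterlim (\<lambda>m. norm (vs m)) at_top sequentially"
    and gt: "grass_tendsto (CARD('k) + 1) (\<lambda>m. alpha (us m, vs m)) W"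
  shows "W \<subseteq> {p. snd p = 0}"
proof -
  obtain Bs B where Bs: "\<And>m. onb (CARD('k) + 1) (Bs m) (alpha (us m, vs m))"
    and B: "onb (CARD('k) + 1) B W" and lim: "\<And>i. i < CARD('k) + 1 \<Longrightarrow> (\<lambda>m. Bs m i) \<longlonglongrightarrow> B i"
    using gt unfolding grass_tendsto_def by blast
  have "snd (B i) = 0" if i: "i < CARD('k) + 1" for i
  proof -
    have bnd: "\<bar>snd (Bs m i)\<bar> * norm (vs m) \<le> 1" for m
    proof -
      have "Bs m i \<in> alpha (us m, vs m)" using Bs[of m] i unfolding onb_def
        by (metis imageI lessThan_iff span_base)
      then obtain y t where yt: "Bs m i = (y + t *\<^sub>R vs m, t)" "y \<in> lin (us m)"
        using alpha_char[OF fibD(1)[OF F fib[of m]]] by auto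
      have "y \<bullet> vs m = 0" using fibD(2)[OF F fib[of m]] yt(2) by (simp add: inner_commute)
      then have "\<bar>t\<bar> * norm (vs m) \<le> norm (Bs m i)" using alpha_norm_bound yt(1) by metis
      moreover have "norm (Bs m i) = 1" using Bs[of m] i unfolding onb_def by (simp add: norm_eq_1)
      ultimately show ?thesis using yt(1) by simp
    qed
    have ev: "eventually (\<lambda>m. norm (snd (Bs m i)) \<le> inverse (norm (vs m))) sequentially"
    proof -
      have "eventually (\<lambda>m. 1 \<le> norm (vs m)) sequentially" using inf by (simp add: filterlim_at_top)
      then show ?thesis
      proof eventually_elim
        case (elim m)
        have p: "0 < norm (vs m)" using elim by linarith
        have "\<bar>snd (Bs m i)\<bar> * norm (vs m) \<le> 1" using bnd[of m] by simp
        then show ?case using p by (simp add: inverse_eq_divide pos_le_divide_eq)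
      qed
    qed
    have "(\<lambda>m. snd (Bs m i)) \<longlonglongrightarrow> 0"
      by (rule Lim_null_comparison[OF ev tendsto_inverse_0_at_top[OF inf]])
    moreover have "(\<lambda>m. snd (Bs m i)) \<longlonglongrightarrow> snd (B i)" using lim[OF i] by (rule tendsto_snd)
    ultimately show ?thesis using LIMSEQ_unique by metis
  qed
  then have "B ` {..<CARD('k) + 1} \<subseteq> {p. snd p = 0}" by auto
  then have "span (B ` {..<CARD('k) + 1}) \<subseteq> {p. snd p = 0}" using span_minimal subspace_snd0 by blast
  then show ?thesis using B unfolding onb_def by simp
qed

definition PF :: "(('k::finite \<Rightarrow> 'a::euclidean_space) set \<times> 'a) set \<Rightarrow> 'a \<Rightarrow> ('k \<Rightarrow> 'a) set \<times> 'a" where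
  "PF Fib z = (SOME P. P \<in> Fib \<and> z \<in> aff P)"

lemma PF:
  assumes "skew_fibration Fib" shows "PF Fib z \<in> Fib" "z \<in> aff (PF Fib z)"
proof -
  have "\<exists>P. P \<in> Fib \<and> z \<in> aff P" using fib_cover[OF assms] by blast
  then have "PF Fib z \<in> Fib \<and> z \<in> aff (PF Fib z)" unfolding PF_def by (rule someI_ex)
  then show "PF Fib z \<in> Fib" "z \<in> aff (PF Fib z)" by auto
qed

lemma PF_eq:
  assumes "skew_fibration Fib" "P \<in> Fib" "z \<in> aff P" shows "PF Fib z = P"
  using fib_disj[OF assms(1) PF(1)[OF assms(1)] assms(2) PF(2)[OF assms(1)] assms(3)] .

definition prj :: "('k::finite \<Rightarrow> 'a::euclidean_space) set \<Rightarrow> 'a \<Rightarrow> 'a" where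
  "prj u e = (\<Sum>l\<in>UNIV. (e \<bullet> (SOME E. E \<in> u) l) *\<^sub>R (SOME E. E \<in> u) l)"

lemma prj_eq:
  fixes u :: "('k::finite \<Rightarrow> 'a::euclidean_space) set"
  assumes u: "is_oplane u" and E: "E \<in> u"
  shows "prj u e = (\<Sum>l\<in>UNIV. (e \<bullet> E l) *\<^sub>R E l)"
proof -
  define E0 where "E0 = (SOME E. E \<in> u)"
  have E0: "E0 \<in> u" unfolding E0_def using E by (rule someI[of "\<lambda>E. E \<in> u"])
  note m0 = is_oplane_mem[OF u E0] and m = is_oplane_mem[OF u E]
  have "prj u e = (\<Sum>l\<in>UNIV. (e \<bullet> E0 l) *\<^sub>R E0 l)" unfolding prj_def E0_def ..
  also have "\<dots> = (\<Sum>l\<in>UNIV. (e \<bullet> E l) *\<^sub>R E l)"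
  proof (rule proj_unique[OF subspace_lin[OF u]])
    show "(\<Sum>l\<in>UNIV. (e \<bullet> E0 l) *\<^sub>R E0 l) \<in> lin u"
      using onb_proj(1)[OF finite frame_on[OF m0(2)]] m0(3) by simp
    show "(\<Sum>l\<in>UNIV. (e \<bullet> E l) *\<^sub>R E l) \<in> lin u"
      using onb_proj(1)[OF finite frame_on[OF m(2)]] m(3) by simp
    show "\<forall>y\<in>lin u. (e - (\<Sum>l\<in>UNIV. (e \<bullet> E0 l) *\<^sub>R E0 l)) \<bullet> y = 0"
      using onb_proj(2)[OF finite frame_on[OF m0(2)]] m0(3) by simp
    show "\<forall>y\<in>lin u. (e - (\<Sum>l\<in>UNIV. (e \<bullet> E l) *\<^sub>R E l)) \<bullet> y = 0"
      using onb_proj(2)[OF finite frame_on[OF m(2)]] m(3) by simp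
  qed
  finally show ?thesis .
qed

lemma prj_props:
  fixes u :: "('k::finite \<Rightarrow> 'a::euclidean_space) set"
  assumes u: "is_oplane u"
  shows "prj u e \<in> lin u" "y \<in> lin u \<Longrightarrow> (e - prj u e) \<bullet> y = 0"
    "e \<in> lin u \<Longrightarrow> prj u e = e"
    "prj u (a - c *\<^sub>R b) = prj u a - c *\<^sub>R prj u b"
proof -
  obtain E where E: "E \<in> u" using is_oplane_ne[OF u] by blast
  note m = is_oplane_mem[OF u E]
  note pe = prj_eq[OF u E]
  show "prj u e \<in> lin u" using onb_proj(1)[OF finite frame_on[OF m(2)]] m(3) pe by simp
  show "y \<in> lin u \<Longrightarrow> (e - prj u e) \<bullet> y = 0"
    using onb_proj(2)[OF finite frame_on[OF m(2)]] m(3) pe by simp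
  show "e \<in> lin u \<Longrightarrow> prj u e = e"
    using onb_expand[OF finite frame_on[OF m(2)], of e] m(3) pe by simp
  show "prj u (a - c *\<^sub>R b) = prj u a - c *\<^sub>R prj u b"
    by (simp add: pe inner_diff_left scaleR_diff_left sum_subtractf scaleR_sum_right)
qed

lemma pi_cont_seq:
  fixes Fib :: "(('k::finite \<Rightarrow> 'a::euclidean_space) set \<times> 'a) set"
  assumes F: "skew_fibration Fib" and ds: "ds \<longlonglongrightarrow> d0" and es: "es \<longlonglongrightarrow> e0"
  shows "(\<lambda>j. prj (fst (PF Fib (ds j))) (es j)) \<longlonglongrightarrow> prj (fst (PF Fib d0)) e0"
proof -
  have "oplane_tendsto (\<lambda>j. fst (PF Fib (ds j))) (fst (PF Fib d0))"
    by (rule fib_cont(1)[OF F ds PF[OF F]]) (use PF[OF F] in auto)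
  then obtain Es E where X: "\<And>m. Es m \<in> fst (PF Fib (ds m))" "E \<in> fst (PF Fib d0)"
    "\<And>i. (\<lambda>m. Es m i) \<longlonglongrightarrow> E i" unfolding oplane_tendsto_def by blast
  have "(\<lambda>j. (\<Sum>l\<in>UNIV. (es j \<bullet> Es j l) *\<^sub>R Es j l)) \<longlonglongrightarrow> (\<Sum>l\<in>UNIV. (e0 \<bullet> E l) *\<^sub>R E l)"
    by (intro tendsto_sum tendsto_scaleR tendsto_inner es X(3))
  moreover have "prj (fst (PF Fib (ds j))) (es j) = (\<Sum>l\<in>UNIV. (es j \<bullet> Es j l) *\<^sub>R Es j l)" for j
    by (rule prj_eq[OF fibD(1)[OF F PF(1)[OF F]] X(1)])
  moreover have "prj (fst (PF Fib d0)) e0 = (\<Sum>l\<in>UNIV. (e0 \<bullet> E l) *\<^sub>R E l)"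
    by (rule prj_eq[OF fibD(1)[OF F PF(1)[OF F]] X(2)])
  ultimately show ?thesis by simp
qed

lemma pi_cont:
  fixes Fib :: "(('k::finite \<Rightarrow> 'a::euclidean_space) set \<times> 'a) set"
  assumes F: "skew_fibration Fib"
  shows "continuous_on UNIV (\<lambda>p. prj (fst (PF Fib (fst p))) (snd p))"
proof (rule continuous_on_sequentiallyI)
  fix u :: "nat \<Rightarrow> 'a \<times> 'a" and a assume "u \<longlonglongrightarrow> a"
  then have "(\<lambda>n. fst (u n)) \<longlonglongrightarrow> fst a" "(\<lambda>n. snd (u n)) \<longlonglongrightarrow> snd a"
    by (auto intro: tendsto_fst tendsto_snd)
  then show "(\<lambda>n. prj (fst (PF Fib (fst (u n)))) (snd (u n))) \<longlonglongrightarrow> prj (fst (PF Fib (fst a))) (snd a)"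
    by (rule pi_cont_seq[OF F])
qed




lemma local_nonexist:
  fixes d0 :: "'a::metric_space" and R :: "'a \<Rightarrow> 'b::real_normed_vector \<Rightarrow> bool"
  assumes "\<And>ds ts. ds \<longlonglongrightarrow> d0 \<Longrightarrow> (\<And>j. norm (ts j) = 1) \<Longrightarrow> (\<And>j. R (ds j) (ts j)) \<Longrightarrow> False"
  shows "\<exists>\<delta>>0. \<forall>d\<in>ball d0 \<delta>. \<forall>t. norm t = 1 \<longrightarrow> \<not> R d t"
proof (rule ccontr)
  assume "\<not> ?thesis"
  then have "\<forall>j::nat. \<exists>d t. d \<in> ball d0 (1 / (Suc j)) \<and> norm t = 1 \<and> R d t"
    by (metis of_nat_0_less_iff zero_less_Suc divide_pos_pos zero_less_one)
  then obtain ds ts where h: "\<And>j. ds j \<in> ball d0 (1 / Suc j) \<and> norm (ts j) = 1 \<and> R (ds j) (ts j)"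
    by metis
  have "ds \<longlonglongrightarrow> d0"
  proof (rule tendsto_sandwich[THEN iffD2[OF tendsto_dist_iff], rotated 2])
    show "(\<lambda>n. 0::real) \<longlonglongrightarrow> 0" by simp
    show "(\<lambda>n. 1 / real (Suc n)) \<longlonglongrightarrow> 0" using LIMSEQ_inverse_real_of_nat by (simp add: inverse_eq_divide)
  qed (use h in \<open>auto simp: dist_commute less_imp_le\<close>)
  then show False by (rule assms[of ds ts]) (use h in auto)
qed

lemma sphere_subseq:
  fixes ts :: "nat \<Rightarrow> 'a::euclidean_space"
  assumes "\<And>j. norm (ts j) = 1"
  obtains r l where "strict_mono r" "norm l = 1" "(\<lambda>j. ts (r j)) \<longlonglongrightarrow> l"
proof -
  have "\<forall>j. ts j \<in> sphere 0 1" using assms by simp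
  from seq_compactE[OF compact_imp_seq_compact[OF compact_sphere] this]
  obtain l r where lr: "l \<in> sphere 0 1" "strict_mono (r :: nat \<Rightarrow> nat)" "(ts \<circ> r) \<longlonglongrightarrow> l" .
  show ?thesis by (rule that[of r l]) (use lr in \<open>auto simp: o_def\<close>)
qed

lemma near_T:
  fixes Fib :: "(('k::finite \<Rightarrow> 'a::euclidean_space) set \<times> 'a) set"
  assumes F: "skew_fibration Fib" and Q: "Q \<in> Fib"
  shows "\<exists>\<delta>>0. \<forall>d\<in>ball (snd Q) \<delta>. \<forall>t. norm t = 1 \<longrightarrow>
           \<not> (t \<in> {y. \<forall>z\<in>lin (fst Q). orthogonal z y} \<and> t \<in> lin (fst (PF Fib d)))"
proof (rule local_nonexist[where R="\<lambda>d t. t \<in> {y. \<forall>z\<in>lin (fst Q). orthogonal z y} \<and> t \<in> lin (fst (PF Fib d))"])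
  fix ds ts assume ds: "ds \<longlonglongrightarrow> snd Q" and n: "\<And>j. norm (ts j) = (1::real)"
    and R: "\<And>j. ts j \<in> {y. \<forall>z\<in>lin (fst Q). orthogonal z y} \<and> ts j \<in> lin (fst (PF Fib (ds j)))"
  obtain r l where r: "strict_mono r" "norm l = 1" "(\<lambda>j. ts (r j)) \<longlonglongrightarrow> l"
    by (rule sphere_subseq[OF n])
  have dsr: "(\<lambda>j. ds (r j)) \<longlonglongrightarrow> snd Q" using LIMSEQ_subseq_LIMSEQ[OF ds r(1)] by (simp add: o_def)
  have PQ: "PF Fib (snd Q) = Q" by (rule PF_eq[OF F Q snd_in_aff[OF fibD(1)[OF F Q]]])
  have "(\<lambda>j. prj (fst (PF Fib (ds (r j)))) (ts (r j))) \<longlonglongrightarrow> prj (fst Q) l"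
    using pi_cont_seq[OF F dsr r(3)] PQ by simp
  moreover have "prj (fst (PF Fib (ds (r j)))) (ts (r j)) = ts (r j)" for j
    using R[of "r j"] by (intro prj_props(3)[OF fibD(1)[OF F PF(1)[OF F]]]) simp
  ultimately have "(\<lambda>j. ts (r j)) \<longlonglongrightarrow> prj (fst Q) l" by simp
  then have "prj (fst Q) l = l" using r(3) by (rule LIMSEQ_unique)
  then have l1: "l \<in> lin (fst Q)" using prj_props(1)[OF fibD(1)[OF F Q], of l] by simp
  have "closed {y. \<forall>z\<in>lin (fst Q). orthogonal z y}"
    by (rule closed_subspace[OF subspace_orthogonal_to_vectors])
  then have "l \<in> {y. \<forall>z\<in>lin (fst Q). orthogonal z y}"
    by (rule closed_sequentially[of _ "\<lambda>j. ts (r j)"]) (use r(3) R in auto)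
  then have "orthogonal l l" using l1 by blast
  then show False using r(2) by (simp add: orthogonal_def)
qed

lemma near_inj:
  fixes Fib :: "(('k::finite \<Rightarrow> 'a::euclidean_space) set \<times> 'a) set"
  assumes F: "skew_fibration Fib" and Q: "Q \<in> Fib"
  shows "\<exists>\<delta>>0. \<forall>d\<in>ball (snd Q) \<delta>. \<forall>e. norm e = 1 \<longrightarrow>
           \<not> (e \<in> lin (fst Q) \<and> prj (fst (PF Fib d)) e = 0)"
proof (rule local_nonexist[where R="\<lambda>d e. e \<in> lin (fst Q) \<and> prj (fst (PF Fib d)) e = 0"])
  fix ds ts assume ds: "ds \<longlonglongrightarrow> snd Q" and n: "\<And>j. norm (ts j) = (1::real)"
    and R: "\<And>j. ts j \<in> lin (fst Q) \<and> prj (fst (PF Fib (ds j))) (ts j) = 0"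
  obtain r l where r: "strict_mono r" "norm l = 1" "(\<lambda>j. ts (r j)) \<longlonglongrightarrow> l"
    by (rule sphere_subseq[OF n])
  have dsr: "(\<lambda>j. ds (r j)) \<longlonglongrightarrow> snd Q" using LIMSEQ_subseq_LIMSEQ[OF ds r(1)] by (simp add: o_def)
  have PQ: "PF Fib (snd Q) = Q" by (rule PF_eq[OF F Q snd_in_aff[OF fibD(1)[OF F Q]]])
  have "(\<lambda>j. prj (fst (PF Fib (ds (r j)))) (ts (r j))) \<longlonglongrightarrow> prj (fst Q) l"
    using pi_cont_seq[OF F dsr r(3)] PQ by simp
  moreover have "prj (fst (PF Fib (ds (r j)))) (ts (r j)) = 0" for j using R by blast
  ultimately have "(\<lambda>j. 0) \<longlonglongrightarrow> prj (fst Q) l" by simp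
  then have p0: "prj (fst Q) l = 0" by (simp add: LIMSEQ_const_iff)
  have "closed (lin (fst Q))" by (rule closed_subspace[OF subspace_lin[OF fibD(1)[OF F Q]]])
  then have "l \<in> lin (fst Q)"
    by (rule closed_sequentially[of _ "\<lambda>j. ts (r j)"]) (use r(3) R in auto)
  then have "l = 0" using p0 prj_props(3)[OF fibD(1)[OF F Q], of l] by simp
  then show False using r(2) by simp
qed

lemma prj_lin:
  fixes u :: "('k::finite \<Rightarrow> 'a::euclidean_space) set"
  assumes u: "is_oplane u"
  shows "prj u (a + b) = prj u a + prj u b" "prj u (c *\<^sub>R a) = c *\<^sub>R prj u a"
proof -
  obtain E where E: "E \<in> u" using is_oplane_ne[OF u] by blast
  note pe = prj_eq[OF u E]
  show "prj u (a + b) = prj u a + prj u b"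
    by (simp add: pe inner_add_left scaleR_add_left sum.distrib)
  show "prj u (c *\<^sub>R a) = c *\<^sub>R prj u a"
    by (simp add: pe scaleR_sum_right)
qed

lemma dim_lin:
  fixes u :: "('k::finite \<Rightarrow> 'a::euclidean_space) set"
  assumes u: "is_oplane u" shows "dim (lin u) = CARD('k)"
proof -
  obtain E where E: "E \<in> u" using is_oplane_ne[OF u] by blast
  note m = is_oplane_mem[OF u E]
  have on: "E i \<bullet> E j = (if i = j then 1 else 0)" for i j using m(2) by (simp add: orthonormal_frame_def)
  have inj: "inj E"
  proof (rule injI)
    fix i j assume "E i = E j"
    then have "E i \<bullet> E j = 1" using on[of j j] by simp
    then show "i = j" using on[of i j] by (cases "i = j") auto
  qed
  have "pairwise orthogonal (range E)"
    unfolding pairwise_def orthogonal_def using on by auto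
  moreover have "0 \<notin> range E" using on by (metis (no_types) image_iff inner_zero_left zero_neq_one)
  ultimately have "independent (range E)" by (rule pairwise_orthogonal_independent)
  then have "dim (span (range E)) = card (range E)" by (rule dim_span_eq_card_independent)
  also have "\<dots> = CARD('k)" using inj by (simp add: card_image)
  finally show ?thesis using m(3) by simp
qed

lemma approx_seq:
  assumes gt: "grass_tendsto d Ws W" and y: "y \<in> W"
  shows "\<exists>as. (\<forall>m. as m \<in> Ws m) \<and> as \<longlonglongrightarrow> y"
proof -
  obtain Bs B where Bs: "\<And>m. onb d (Bs m) (Ws m)"
    and B: "onb d B W" and lim: "\<And>i. i < d \<Longrightarrow> (\<lambda>m. Bs m i) \<longlonglongrightarrow> B i"
    using gt unfolding grass_tendsto_def by blast
  have on: "\<forall>i\<in>{..<d}. \<forall>j\<in>{..<d}. B i \<bullet> B j = (if i = j then 1 else 0)" using B by (simp add: onb_def)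
  have ye: "y = (\<Sum>i\<in>{..<d}. (y \<bullet> B i) *\<^sub>R B i)"
    by (rule onb_expand[OF finite_lessThan on]) (use y B in \<open>simp add: onb_def\<close>)
  define as where "as m = (\<Sum>i\<in>{..<d}. (y \<bullet> B i) *\<^sub>R Bs m i)" for m
  have "as m \<in> Ws m" for m
  proof -
    have "as m \<in> span (Bs m ` {..<d})" unfolding as_def
      by (intro span_sum span_scale span_base) auto
    then show ?thesis using Bs[of m] by (simp add: onb_def)
  qed
  moreover have "as \<longlonglongrightarrow> y"
  proof -
    have "(\<lambda>m. \<Sum>i\<in>{..<d}. (y \<bullet> B i) *\<^sub>R Bs m i) \<longlonglongrightarrow> (\<Sum>i\<in>{..<d}. (y \<bullet> B i) *\<^sub>R B i)"
      by (rule tendsto_sum) (auto intro!: tendsto_scaleR tendsto_const lim)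
    then show ?thesis using ye unfolding as_def by simp
  qed
  ultimately show ?thesis by blast
qed

lemma part2:
  fixes Fib :: "(('k::finite \<Rightarrow> real^'n) set \<times> (real^'n)) set"
  assumes F: "skew_fibration Fib" and fib: "\<And>m. (us m, vs m) \<in> Fib" and ub: "is_oplane ubar"
    and tu: "oplane_tendsto us ubar" and nU: "ubar \<notin> fst ` Fib"
    and Q: "Q \<in> Fib" and x: "x \<in> lin (fst Q)" and nx: "norm x = 1"
    and as: "\<And>m. as m \<in> alpha (us m, vs m)" and asl: "as \<longlonglongrightarrow> (x, 0)"
  shows False
proof -
  define u where "u = fst Q"
  define vQ where "vQ = snd Q"
  have uQ: "is_oplane u" using fibD(1)[OF F Q] u_def by simp
  have su: "subspace (lin u)" by (rule subspace_lin[OF uQ])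
  have xu: "x \<in> lin u" using x u_def by simp
  have xx: "x \<bullet> x = 1" using nx by (simp add: norm_eq_1)
  have x0: "x \<noteq> 0" using nx by auto
  define T where "T = {y. \<forall>z\<in>lin u. orthogonal z y}"
  define Lx where "Lx = {y \<in> lin u. \<forall>z\<in>span {x}. orthogonal z y}"
  define pi where "pi d e = prj (fst (PF Fib d)) e" for d e
  have PQ: "PF Fib vQ = Q" unfolding vQ_def by (rule PF_eq[OF F Q snd_in_aff[OF fibD(1)[OF F Q]]])
  have PFo: "is_oplane (fst (PF Fib d))" for d by (rule fibD(1)[OF F PF(1)[OF F]])
  have sT: "subspace T" unfolding T_def by (rule subspace_orthogonal_to_vectors)
  have Lx_eq: "Lx = lin u \<inter> {y. \<forall>z\<in>span {x}. orthogonal z y}" unfolding Lx_def by auto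
  have sLx: "subspace Lx" unfolding Lx_eq by (intro subspace_inter su subspace_orthogonal_to_vectors)
  have Lxu: "w \<in> Lx \<Longrightarrow> w \<in> lin u" for w unfolding Lx_def by simp
  have Lxx: "w \<in> Lx \<Longrightarrow> x \<bullet> w = 0" for w unfolding Lx_def orthogonal_def by (auto intro: span_base)
  have Tx: "d \<in> T \<Longrightarrow> x \<bullet> d = 0" for d unfolding T_def orthogonal_def using xu by auto
  obtain \<delta>1 where d1: "\<delta>1 > 0" "\<forall>d\<in>ball vQ \<delta>1. \<forall>t. norm t = 1 \<longrightarrow>
           \<not> (t \<in> T \<and> t \<in> lin (fst (PF Fib d)))"
    using near_T[OF F Q] unfolding T_def u_def vQ_def by blast
  obtain \<delta>2 where d2: "\<delta>2 > 0" "\<forall>d\<in>ball vQ \<delta>2. \<forall>e. norm e = 1 \<longrightarrow>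
           \<not> (e \<in> lin u \<and> pi d e = 0)"
    using near_inj[OF F Q] unfolding pi_def u_def vQ_def by blast
  define \<delta> where "\<delta> = min \<delta>1 \<delta>2"
  have dpos: "\<delta> > 0" using d1 d2 \<delta>_def by simp
  have Tinj: "t = 0" if d: "d \<in> ball vQ \<delta>" and t: "t \<in> T" "t \<in> lin (fst (PF Fib d))" for d t
  proof (rule ccontr)
    assume t0: "t \<noteq> 0"
    let ?t = "(1 / norm t) *\<^sub>R t"
    have "norm ?t = 1" using t0 by simp
    moreover have "?t \<in> T" by (rule subspace_scale[OF sT t(1)])
    moreover have "?t \<in> lin (fst (PF Fib d))" by (rule subspace_scale[OF subspace_lin[OF PFo] t(2)])
    moreover have "d \<in> ball vQ \<delta>1" using d \<delta>_def by auto
    ultimately show False using d1(2) by blast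
  qed
  have pinj: "e = 0" if d: "d \<in> ball vQ \<delta>" and e: "e \<in> lin u" "pi d e = 0" for d e
  proof (rule ccontr)
    assume e0: "e \<noteq> 0"
    let ?e = "(1 / norm e) *\<^sub>R e"
    have "norm ?e = 1" using e0 by simp
    moreover have "?e \<in> lin u" by (rule subspace_scale[OF su e(1)])
    moreover have "pi d ?e = 0" using e(2) unfolding pi_def by (simp add: prj_lin(2)[OF PFo])
    moreover have "d \<in> ball vQ \<delta>2" using d \<delta>_def by auto
    ultimately show False using d2(2) by blast
  qed
  define g where "g p = pi (fst p) (x + fst (snd p)) \<bullet> x" for p :: "(real^'n) \<times> (real^'n) \<times> real"
  define Psi where "Psi p = (pi (fst p) (x + fst (snd p)) + snd (snd p) *\<^sub>R fst p, snd (snd p))"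
    for p :: "(real^'n) \<times> (real^'n) \<times> real"
  define Phi where "Phi p = (1 / g p) *\<^sub>R Psi p - (x, 0)" for p
  define U0 where "U0 = T \<times> (Lx \<times> (UNIV :: real set))"
  define Om where "Om = U0 \<inter> ({p. dist vQ (fst p) < \<delta>} \<inter> {p. 0 < g p})"
  define V where "V = {q :: (real^'n) \<times> real. (x, 0) \<bullet> q = 0}"
  have cpi: "continuous_on UNIV (\<lambda>p::(real^'n) \<times> (real^'n) \<times> real. pi (fst p) (x + fst (snd p)))"
  proof -
    have "continuous_on UNIV (\<lambda>q::(real^'n) \<times> (real^'n). prj (fst (PF Fib (fst q))) (snd q))"
      by (rule pi_cont[OF F])
    moreover have "continuous_on UNIV (\<lambda>p::(real^'n) \<times> (real^'n) \<times> real. (fst p, x + fst (snd p)))"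
      by (intro continuous_intros)
    ultimately show ?thesis unfolding pi_def
      using continuous_on_compose2[of UNIV "\<lambda>q::(real^'n) \<times> (real^'n). prj (fst (PF Fib (fst q))) (snd q)"
          UNIV "\<lambda>p::(real^'n) \<times> (real^'n) \<times> real. (fst p, x + fst (snd p))"] by simp
  qed
  have cg: "continuous_on UNIV g" unfolding g_def by (intro continuous_intros cpi)
  have cPsi: "continuous_on UNIV Psi" unfolding Psi_def by (intro continuous_intros cpi)
  have gpos: "p \<in> Om \<Longrightarrow> 0 < g p" for p unfolding Om_def by simp
  have cPhi: "continuous_on Om Phi" unfolding Phi_def
    by (intro continuous_intros continuous_on_subset[OF cPsi] continuous_on_subset[OF cg])
       (auto dest: gpos)
  have sU0: "subspace U0" unfolding U0_def by (intro subspace_Times sT sLx subspace_UNIV)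
  have sV: "subspace V" unfolding V_def by (rule subspace_hyperplane)
  have oOm: "openin (top_of_set U0) Om" unfolding Om_def
  proof (rule openin_open_Int, rule open_Int)
    show "open {p::(real^'n) \<times> (real^'n) \<times> real. dist vQ (fst p) < \<delta>}"
      by (rule open_Collect_less) (intro continuous_intros)+
    show "open {p. 0 < g p}" by (rule open_Collect_less) (intro continuous_intros cg)+
  qed
  have dimV: "dim V = CARD('n)"
  proof -
    have "(x, 0::real) \<noteq> 0" using x0 by (simp add: zero_prod_def)
    then show ?thesis unfolding V_def using dim_hyperplane[of "(x, 0::real)"] by simp
  qed
  have dimU0: "dim U0 = CARD('n)"
  proof -
    have a: "dim T + CARD('k) = CARD('n)"
      using dim_subspace_orthogonal_to_vectors[OF su subspace_UNIV subset_UNIV] dim_lin[OF uQ]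
      unfolding T_def by simp
    have sx: "span {x} \<subseteq> lin u" using xu su by (simp add: span_minimal)
    have b: "dim Lx + 1 = CARD('k)"
      using dim_subspace_orthogonal_to_vectors[OF subspace_span su sx] dim_lin[OF uQ] x0
      unfolding Lx_def by (simp add: dim_span)
    have "dim U0 = dim T + (dim Lx + dim (UNIV :: real set))"
      unfolding U0_def by (simp add: dim_Times sT sLx subspace_Times)
    then show ?thesis using a b by simp
  qed
  have Psi_alpha: "Psi p \<in> alpha (PF Fib (fst p))" for p
  proof -
    obtain d w t where p: "p = (d, w, t)" by (cases p) auto
    let ?P = "PF Fib d"
    have l1: "pi d (x + w) \<in> lin (fst ?P)" unfolding pi_def by (rule prj_props(1)[OF PFo])
    have l2: "d - snd ?P \<in> lin (fst ?P)" using PF(2)[OF F, of d] aff_iff by blast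
    have "pi d (x + w) + t *\<^sub>R (d - snd ?P) \<in> lin (fst ?P)"
      using subspace_lin[OF PFo] l1 l2 by (simp add: subspace_add subspace_scale)
    moreover have "Psi p = (pi d (x + w) + t *\<^sub>R (d - snd ?P) + t *\<^sub>R snd ?P, t)"
      unfolding Psi_def p by (simp add: algebra_simps)
    ultimately show ?thesis unfolding p using alpha_char[OF PFo, of d] by auto
  qed
  have Psi_inner: "(x, 0) \<bullet> Psi p = g p" if "fst p \<in> T" for p
    using Tx[OF that] unfolding Psi_def g_def by (simp add: inner_add_right inner_commute)
  have Om_mem: "fst p \<in> T" "fst (snd p) \<in> Lx" "dist vQ (fst p) < \<delta>" "0 < g p" if "p \<in> Om" for p
    using that unfolding Om_def U0_def by auto
  have Phi_V: "Phi p \<in> V" if p: "p \<in> Om" for p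
  proof -
    have "(x, 0) \<bullet> Phi p = (1 / g p) * g p - x \<bullet> x"
      unfolding Phi_def using Psi_inner[OF Om_mem(1)[OF p]] by (simp add: inner_diff_right)
    then show ?thesis unfolding V_def using Om_mem(4)[OF p] xx by simp
  qed
  have alpha_sub: "subspace (alpha P)" for P :: "('k \<Rightarrow> real^'n) set \<times> (real^'n)"
    unfolding alpha_def by (rule subspace_span)
  have inj: "inj_on Phi Om"
  proof (rule inj_onI)
    fix p1 p2 assume p1: "p1 \<in> Om" and p2: "p2 \<in> Om" and eq: "Phi p1 = Phi p2"
    obtain d1 w1 s1 where pp1: "p1 = (d1, w1, s1)" by (cases p1) auto
    obtain d2 w2 s2 where pp2: "p2 = (d2, w2, s2)" by (cases p2) auto
    note m1 = Om_mem[OF p1] and m2 = Om_mem[OF p2]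
    define c where "c = g p1 / g p2"
    have cpos: "c > 0" unfolding c_def using m1(4) m2(4) by simp
    have e1: "(1 / g p1) *\<^sub>R Psi p1 = (1 / g p2) *\<^sub>R Psi p2" using eq unfolding Phi_def by simp
    have "Psi p1 = g p1 *\<^sub>R ((1 / g p1) *\<^sub>R Psi p1)" using m1(4) by simp
    also have "\<dots> = g p1 *\<^sub>R ((1 / g p2) *\<^sub>R Psi p2)" using e1 by simp
    also have "\<dots> = c *\<^sub>R Psi p2" unfolding c_def by simp
    finally have PsiE: "Psi p1 = c *\<^sub>R Psi p2" .
    have nz: "Psi p1 \<noteq> 0" using Psi_inner[OF m1(1)] m1(4) by auto
    have "Psi p1 \<in> alpha (PF Fib d2)"
      unfolding PsiE using subspace_scale[OF alpha_sub Psi_alpha[of p2]] pp2 by simp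
    then have PP: "PF Fib d1 = PF Fib d2"
      using alpha_common[OF F PF(1)[OF F] PF(1)[OF F] Psi_alpha[of p1] _ nz] pp1 by simp
    have "d2 - d1 \<in> lin (fst (PF Fib d1))"
      using aff_iff2[OF PFo PF(2)[OF F, of d1]] PF(2)[OF F, of d2] PP by simp
    moreover have "d2 - d1 \<in> T" using m1(1) m2(1) pp1 pp2 sT by (simp add: subspace_diff)
    moreover have "d1 \<in> ball vQ \<delta>" using m1(3) pp1 by simp
    ultimately have "d2 - d1 = 0" using Tinj by blast
    then have dd: "d2 = d1" by simp
    have s12: "s1 = c * s2" using PsiE unfolding Psi_def pp1 pp2 by simp
    have "fst (Psi p1) = c *\<^sub>R fst (Psi p2)" using PsiE by simp
    then have "pi d1 (x + w1) + s1 *\<^sub>R d1 = c *\<^sub>R (pi d1 (x + w2) + s2 *\<^sub>R d1)"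
      unfolding Psi_def pp1 pp2 dd by simp
    then have "pi d1 (x + w1) = c *\<^sub>R pi d1 (x + w2)"
      using s12 by (simp add: algebra_simps)
    then have "pi d1 ((x + w1) + (- c) *\<^sub>R (x + w2)) = 0"
      unfolding pi_def by (simp add: prj_lin[OF PFo] prj_props(4)[OF PFo])
    moreover have "(x + w1) + (- c) *\<^sub>R (x + w2) \<in> lin u"
    proof -
      have a: "x + w1 \<in> lin u" "x + w2 \<in> lin u"
        using m1(2) m2(2) pp1 pp2 Lxu xu subspace_add[OF su] by auto
      show ?thesis using subspace_add[OF su a(1) subspace_scale[OF su a(2)]] .
    qed
    ultimately have z: "(x + w1) + (- c) *\<^sub>R (x + w2) = 0"
      using pinj \<open>d1 \<in> ball vQ \<delta>\<close> by blast
    have "x \<bullet> ((x + w1) + (- c) *\<^sub>R (x + w2)) = 1 - c"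
    proof -
      have "x \<bullet> w1 = 0" "x \<bullet> w2 = 0" using Lxx m1(2) m2(2) pp1 pp2 by auto
      then show ?thesis using xx by (simp add: inner_add_right inner_diff_right)
    qed
    then have c1: "c = 1" using z by simp
    then have "w1 = w2" using z by (simp add: algebra_simps)
    then show "p1 = p2" using pp1 pp2 dd s12 c1 by simp
  qed
  have img: "openin (top_of_set V) (Phi ` Om)"
    by (rule invariance_of_domain_subspaces[OF oOm sU0 sV _ cPhi _ inj])
       (use dimV dimU0 Phi_V in auto)
  define p0 where "p0 = (vQ, (0::real^'n), (0::real))"
  have vT: "vQ \<in> T" unfolding T_def vQ_def orthogonal_def
    using fibD(2)[OF F Q] u_def by (auto simp: inner_commute)
  have g0: "g p0 = 1"
    unfolding g_def p0_def pi_def using PQ prj_props(3)[OF uQ xu] xx u_def by simp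
  have p0Om: "p0 \<in> Om"
    unfolding Om_def U0_def using vT g0 dpos subspace_0[OF sLx] by (auto simp: p0_def)
  have Phi0: "Phi p0 = 0"
    unfolding Phi_def Psi_def using g0 PQ prj_props(3)[OF uQ xu] u_def
    by (simp add: p0_def pi_def zero_prod_def)
  obtain \<epsilon> where eps: "\<epsilon> > 0" "ball 0 \<epsilon> \<inter> V \<subseteq> Phi ` Om"
    using img p0Om Phi0 unfolding openin_contains_ball by (metis image_eqI)
  define cm where "cm m = as m \<bullet> (x, 0)" for m
  define b where "b m = (1 / cm m) *\<^sub>R as m - (x, 0)" for m
  have cml: "cm \<longlonglongrightarrow> 1"
  proof -
    have "cm \<longlonglongrightarrow> (x, 0) \<bullet> (x, 0::real)" unfolding cm_def by (intro tendsto_inner asl tendsto_const)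
    then show ?thesis using xx by simp
  qed
  have bl: "b \<longlonglongrightarrow> 0"
  proof -
    have "b \<longlonglongrightarrow> (1 / 1) *\<^sub>R (x, 0::real) - (x, 0)" unfolding b_def
      by (intro tendsto_diff tendsto_scaleR tendsto_divide tendsto_const cml asl) simp
    then show ?thesis by simp
  qed
  have ev: "eventually (\<lambda>m. 0 < cm m \<and> dist (b m) 0 < \<epsilon>) sequentially"
    using order_tendstoD(1)[OF cml, of 0] tendstoD[OF bl eps(1)] by (auto elim: eventually_conj)
  then obtain N where N: "\<And>m. N \<le> m \<Longrightarrow> 0 < cm m \<and> dist (b m) 0 < \<epsilon>"
    unfolding eventually_sequentially by blast
  have "\<exists>p. N \<le> m \<longrightarrow> p \<in> Om \<and> b m = Phi p" for m
  proof (cases "N \<le> m")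
    case True
    have "(x, 0) \<bullet> b m = (1 / cm m) * cm m - x \<bullet> x"
      unfolding b_def cm_def by (simp add: inner_diff_right inner_commute)
    then have "b m \<in> V" unfolding V_def using N[OF True] xx by simp
    moreover have "b m \<in> ball 0 \<epsilon>" using N[OF True] by (simp add: dist_commute)
    ultimately have "b m \<in> Phi ` Om" using eps(2) by blast
    then show ?thesis by blast
  qed simp
  then obtain pp where pp: "\<And>m. N \<le> m \<Longrightarrow> pp m \<in> Om \<and> b m = Phi (pp m)" by metis
  have fibm: "PF Fib (fst (pp m)) = (us m, vs m)" if m: "N \<le> m" for m
  proof -
    have pm: "pp m \<in> Om" and bm: "b m = Phi (pp m)" using pp[OF m] by auto
    have gp: "0 < g (pp m)" using Om_mem(4)[OF pm] .
    have cp: "0 < cm m" using N[OF m] by simp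
    have "Psi (pp m) = g (pp m) *\<^sub>R (Phi (pp m) + (x, 0))" unfolding Phi_def using gp by simp
    also have "\<dots> = (g (pp m) / cm m) *\<^sub>R as m" unfolding bm[symmetric] b_def by simp
    finally have PsE: "Psi (pp m) = (g (pp m) / cm m) *\<^sub>R as m" .
    have "Psi (pp m) \<in> alpha (us m, vs m)" unfolding PsE by (rule subspace_scale[OF alpha_sub as])
    moreover have "Psi (pp m) \<noteq> 0" using Psi_inner[OF Om_mem(1)[OF pm]] gp by auto
    ultimately show ?thesis
      using alpha_common[OF F PF(1)[OF F] fib Psi_alpha[of "pp m"]] by blast
  qed
  define D where "D j = fst (pp (N + j))" for j
  have Dc: "\<forall>j. D j \<in> cball vQ \<delta>"
    using Om_mem(3) pp unfolding D_def by (auto simp: less_imp_le)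
  from seq_compactE[OF compact_imp_seq_compact[OF compact_cball] Dc]
  obtain l r where lr: "l \<in> cball vQ \<delta>" "strict_mono (r :: nat \<Rightarrow> nat)" "(D \<circ> r) \<longlonglongrightarrow> l" .
  define \<sigma> where "\<sigma> j = N + r j" for j
  have sm: "strict_mono \<sigma>" using lr(2) unfolding \<sigma>_def strict_mono_def by simp
  have lim: "(\<lambda>j. D (r j)) \<longlonglongrightarrow> l" using lr(3) by (simp add: o_def)
  have inaff: "D (r j) \<in> aff (us (\<sigma> j), vs (\<sigma> j))" for j
    using PF(2)[OF F, of "D (r j)"] fibm[of "\<sigma> j"] unfolding D_def \<sigma>_def by simp
  have "oplane_tendsto (\<lambda>j. fst ((us (\<sigma> j), vs (\<sigma> j)))) (fst (PF Fib l))"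
    by (rule fib_cont(1)[OF F lim PF(1)[OF F] PF(2)[OF F]]) (use fib inaff in auto)
  then have t1: "oplane_tendsto (\<lambda>j. us (\<sigma> j)) (fst (PF Fib l))" by simp
  have t2: "oplane_tendsto (\<lambda>j. us (\<sigma> j)) ubar" by (rule oplane_tendsto_subseq[OF tu sm])
  have "fst (PF Fib l) = ubar"
    by (rule oplane_lim_unique[OF _ PFo ub t1 t2]) (use fibD(1)[OF F fib] in simp)
  then show False using nU PF(1)[OF F, of l] by (metis image_eqI)
qed


theorem lemma5p2:
  fixes Fib :: "(('k::finite \<Rightarrow> real^'n) set \<times> (real^'n)) set"
    and us :: "nat \<Rightarrow> ('k \<Rightarrow> real^'n) set" and vs :: "nat \<Rightarrow> real^'n"
    and ubar :: "('k \<Rightarrow> real^'n) set"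
    and W :: "((real^'n) \<times> real) set" and S :: "((real^'n) \<times> real) set"
  assumes "skew_fibration Fib"
    and "\<forall>m. (us m, vs m) \<in> Fib"
    and "is_oplane ubar" and "oplane_tendsto us ubar" and "ubar \<notin> fst ` Fib"
    and "subspace W" and "S = sphere 0 1 \<inter> W"
    and "grass_tendsto (CARD('k) + 1) (\<lambda>m. alpha (us m, vs m)) W"
  shows "S \<subseteq> equator
    \<and> S \<inter> (\<lambda>x. (x, 0)) ` (\<Union>u\<in>fst ` Fib. lin u \<inter> sphere 0 1) = {}"
proof -
  have fib: "\<And>m. (us m, vs m) \<in> Fib" using assms(2) by blast
  have inf: "filterlim (\<lambda>m. norm (vs m)) at_top sequentially"
    by (rule vs_to_inf[OF assms(1) fib assms(3,4,5)])
  have Wz: "W \<subseteq> {p. snd p = 0}" by (rule part1[OF assms(1) fib inf assms(8)])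
  have "S \<subseteq> equator" using assms(7) Wz unfolding equator_def by auto
  moreover have "S \<inter> (\<lambda>x. (x, 0)) ` (\<Union>u\<in>fst ` Fib. lin u \<inter> sphere 0 1) = {}"
  proof (rule ccontr)
    assume "S \<inter> (\<lambda>x. (x, 0)) ` (\<Union>u\<in>fst ` Fib. lin u \<inter> sphere 0 1) \<noteq> {}"
    then obtain x Q where xS: "(x, 0) \<in> S" and Q: "Q \<in> Fib" and x: "x \<in> lin (fst Q)"
      and nx: "norm x = 1" by auto
    have "(x, 0) \<in> W" using xS assms(7) by auto
    then obtain as where as: "\<forall>m. as m \<in> alpha (us m, vs m)" and asl: "as \<longlonglongrightarrow> (x, 0)"
      using approx_seq[OF assms(8)] by blast
    show False
      by (rule part2[OF assms(1) fib assms(3,4,5) Q x nx _ asl]) (use as in blast)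
  qed
  ultimately show ?thesis by blast
qed

end
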